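(* Let $L$ be the set of all nonempty finite subsets of $\omega$. For $n\in\mathbb{N}$ let $x_n^*\in[-1,1]^L$ be given by $x_n^*(A)=1$ if $n\in A$ and $x_n^*(A)=0$ otherwise, and define $\Phi: FBL(L) \to \mathbb{R}^{\mathbb{N}}$ by $\Phi(f)=(f(x_n^* ))_{n\in\mathbb{N}}$. Then: (1) $\Phi(\delta_A) = \sum_{i \in A}e_i$ for every $A \in L$, where $(e_i)$ are the unit vectors of $c_0$; (2) $\Phi(f)\in c_0$ for every $f\in FBL(L)$, and $\Phi: FBL(L)\to c_0$ is a Banach lattice homomorphism; (3) $\Phi: FBL(L)\to c_0$ is surjective.
   Context: Here $\omega$ denotes the set of natural numbers, indexed so that the coordinates of $c_0$ correspond to its elements. For a nonempty set $A$ and $x\in A$, $\delta_x:[-1,1]^A\to[-1,1]$ is $\delta_x(x^* )=x^*(x)$. For $f:[-1,1]^A\to\mathbb{R}$, $$\|f\| = \sup \Big\{\sum_{i = 1}^n | f(x_{i}^{\ast})| : n \in \mathbb{N},\ x_1^{\ast}, \ldots, x_n^{\ast} \in [-1,1]^A,\ \sup_{x \in A} \sum_{i=1}^n |x_i^{\ast}(x)| \leq 1 \Big\}.$$ $FBL(A)$ is the Banach lattice generated by the functions $\delta_x$ ($x\in A$) inside the Banach lattice of all functions $[-1,1]^A\to\mathbb{R}$ with finite norm (pointwise operations and order). *)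

theory Defs
  imports "HOL-Analysis.Analysis"
begin

text \<open>The cube [-1,1]^A, with points represented as functions 'a => real that
  vanish outside A (so that each point of [-1,1]^A has a unique representative).\<close>
definition cube :: "'a set \<Rightarrow> ('a \<Rightarrow> real) set" where
  "cube A = {x. (\<forall>a\<in>A. \<bar>x a\<bar> \<le> 1) \<and> (\<forall>a. a \<notin> A \<longrightarrow> x a = 0)}"

text \<open>The FBL norm (possibly infinite, hence valued in ereal).  Families
  x_1*,...,x_n* are represented by lists.\<close>
definition fbl_norm :: "'a set \<Rightarrow> (('a \<Rightarrow> real) \<Rightarrow> real) \<Rightarrow> ereal" where
  "fbl_norm A f = (SUP xs \<in> {xs :: ('a \<Rightarrow> real) list. xs \<noteq> [] \<and> set xs \<subseteq> cube A \<and>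
        (\<forall>a\<in>A. (\<Sum>x\<leftarrow>xs. \<bar>x a\<bar>) \<le> 1)}. ereal (\<Sum>x\<leftarrow>xs. \<bar>f x\<bar>))"

definition delta :: "'a \<Rightarrow> ('a \<Rightarrow> real) \<Rightarrow> real" where
  "delta a = (\<lambda>x. x a)"

text \<open>FBL(A): the closed vector sublattice (for the FBL norm) generated by the delta_a,
  inside the space of functions on the cube (pointwise operations).\<close>
inductive_set FBL :: "'a set \<Rightarrow> (('a \<Rightarrow> real) \<Rightarrow> real) set" for A :: "'a set" where
  gen: "a \<in> A \<Longrightarrow> delta a \<in> FBL A"
| zero: "(\<lambda>x. 0) \<in> FBL A"
| add: "f \<in> FBL A \<Longrightarrow> g \<in> FBL A \<Longrightarrow> (\<lambda>x. f x + g x) \<in> FBL A"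
| smult: "f \<in> FBL A \<Longrightarrow> (\<lambda>x. c * f x) \<in> FBL A"
| sup: "f \<in> FBL A \<Longrightarrow> g \<in> FBL A \<Longrightarrow> (\<lambda>x. max (f x) (g x)) \<in> FBL A"
| lim: "(\<And>n. g n \<in> FBL A) \<Longrightarrow> ((\<lambda>n. fbl_norm A (\<lambda>x. g n x - f x)) \<longlongrightarrow> 0) sequentially
        \<Longrightarrow> f \<in> FBL A"

definition c0 :: "(nat \<Rightarrow> real) set" where
  "c0 = {s. s \<longlonglongrightarrow> 0}"

definition unitvec :: "nat \<Rightarrow> nat \<Rightarrow> real" where
  "unitvec i = (\<lambda>n. if n = i then 1 else 0)"

definition finNE :: "nat set set" where
  "finNE = {S. finite S \<and> S \<noteq> {}}"

definition xstar :: "nat \<Rightarrow> nat set \<Rightarrow> real" where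
  "xstar n = (\<lambda>S. if S \<in> finNE \<and> n \<in> S then 1 else 0)"

definition Phi :: "((nat set \<Rightarrow> real) \<Rightarrow> real) \<Rightarrow> nat \<Rightarrow> real" where
  "Phi f = (\<lambda>n. f (xstar n))"

definition fbl_c0_lattice_hom :: "'a set \<Rightarrow> ((('a \<Rightarrow> real) \<Rightarrow> real) \<Rightarrow> nat \<Rightarrow> real) \<Rightarrow> bool" where
  "fbl_c0_lattice_hom A T \<longleftrightarrow>
     (\<forall>f\<in>FBL A. T f \<in> c0) \<and>
     (\<forall>f\<in>FBL A. \<forall>g\<in>FBL A. T (\<lambda>x. f x + g x) = (\<lambda>n. T f n + T g n)) \<and>
     (\<forall>f\<in>FBL A. \<forall>c. T (\<lambda>x. c * f x) = (\<lambda>n. c * T f n)) \<and>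
     (\<forall>f\<in>FBL A. \<forall>g\<in>FBL A. T (\<lambda>x. max (f x) (g x)) = (\<lambda>n. max (T f n) (T g n))) \<and>
     (\<exists>C. \<forall>f\<in>FBL A. ereal (SUP n. \<bar>T f n\<bar>) \<le> ereal C * fbl_norm A f)"

end

theory Submission
  imports Defs
begin

definition admL :: "(nat set \<Rightarrow> real) list \<Rightarrow> bool" where
  "admL xs \<longleftrightarrow> xs \<noteq> [] \<and> set xs \<subseteq> cube finNE \<and> (\<forall>a\<in>finNE. (\<Sum>x\<leftarrow>xs. \<bar>x a\<bar>) \<le> 1)"

lemma fbl_norm_le:
  assumes "\<And>xs. admL xs \<Longrightarrow> (\<Sum>x\<leftarrow>xs. \<bar>f x\<bar>) \<le> c"
  shows "fbl_norm finNE f \<le> ereal c"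
  unfolding fbl_norm_def using assms by (auto simp: admL_def intro!: SUP_least)

lemma single_le:
  assumes "x \<in> cube A"
  shows "ereal \<bar>h x\<bar> \<le> fbl_norm A h"
  unfolding fbl_norm_def
proof (rule SUP_upper2[of "[x]"])
  show "[x] \<in> {xs. xs \<noteq> [] \<and> set xs \<subseteq> cube A \<and> (\<forall>a\<in>A. (\<Sum>x\<leftarrow>xs. \<bar>x a\<bar>) \<le> 1)}"
    using assms by (auto simp: cube_def)
qed simp

lemma single_adm: "x \<in> cube finNE \<Longrightarrow> admL [x]"
  by (auto simp: admL_def cube_def)

lemma xstar_cube: "xstar m \<in> cube finNE"
  by (auto simp: xstar_def cube_def)

lemma xstar_single: "xstar m {j} = (if m = j then 1 else 0)"
  by (auto simp: xstar_def finNE_def)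

lemma xstar_F: "F \<in> finNE \<Longrightarrow> xstar m F = (if m \<in> F then 1 else 0)"
  by (auto simp: xstar_def)

lemma FBL_min:
  assumes "f \<in> FBL A" "g \<in> FBL A"
  shows "(\<lambda>x. min (f x) (g x)) \<in> FBL A"
proof -
  have "(\<lambda>x. -1 * max (-1 * f x) (-1 * g x)) \<in> FBL A"
    by (intro FBL.smult FBL.sup assms)
  moreover have "(\<lambda>x. -1 * max (-1 * f x) (-1 * g x)) = (\<lambda>x. min (f x) (g x))"
    by (auto simp: max_def min_def)
  ultimately show ?thesis by simp
qed

lemma FBL_sum:
  assumes "finite F" "\<And>i. i \<in> F \<Longrightarrow> h i \<in> FBL A"
  shows "(\<lambda>x. \<Sum>i\<in>F. h i x) \<in> FBL A"
  using assms
proof (induction F rule: finite_induct)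
  case empty
  then show ?case using FBL.zero by simp
next
  case (insert a F)
  then show ?case by (simp add: FBL.add)
qed

lemma sum_list_tendsto:
  assumes "\<And>x. x \<in> set xs \<Longrightarrow> (\<lambda>J. F J x) \<longlonglongrightarrow> (L x :: real)"
  shows "(\<lambda>J. \<Sum>x\<leftarrow>xs. F J x) \<longlonglongrightarrow> (\<Sum>x\<leftarrow>xs. L x)"
  using assms by (induction xs) (auto intro!: tendsto_add)

lemma sum_list_swap:
  "(\<Sum>x\<leftarrow>xs. \<Sum>j<J. h j x) = (\<Sum>j<J. \<Sum>x\<leftarrow>xs. (h j x :: real))"
  by (induction xs) (auto simp: sum.distrib)

lemma geom_bound: "(\<Sum>j<J. (1/2::real)^j) \<le> 2"
proof -
  have "(\<Sum>j<J. (1/2::real)^j) = ((1/2)^J - 1) / (1/2 - 1)"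
    by (rule geometric_sum) simp
  also have "\<dots> = 2 - 2 * (1/2)^J" by (simp add: field_simps)
  also have "\<dots> \<le> 2" by simp
  finally show ?thesis .
qed

lemma clamp_le: "\<bar>max (-a) (min a b)\<bar> \<le> \<bar>a::real\<bar>"
  by (auto simp: max_def min_def abs_if)

lemma fin_rep:
  assumes "finite F" "\<forall>m. m \<notin> F \<longrightarrow> r m = 0" "\<forall>m. \<bar>r m\<bar> \<le> c" "c \<ge> 0"
  shows "\<exists>G \<in> FBL finNE. Phi G = r \<and> (\<forall>xs. admL xs \<longrightarrow> (\<Sum>x\<leftarrow>xs. \<bar>G x\<bar>) \<le> c)"
proof -
  define F' where "F' = insert 0 F"
  have F'n: "F' \<in> finNE" using assms(1) by (simp add: F'_def finNE_def)
  define h where "h = (\<lambda>x. \<Sum>j\<in>F. r j * delta {j} x)"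
  have hF: "h \<in> FBL finNE" unfolding h_def
    by (rule FBL_sum) (auto intro!: FBL.smult FBL.gen simp: finNE_def assms(1))
  define G where "G = (\<lambda>x. max (-c * delta F' x) (min (c * delta F' x) (h x)))"
  have "G \<in> FBL finNE" unfolding G_def
    by (intro FBL.sup FBL_min FBL.smult FBL.gen hF F'n)
  moreover have "Phi G = r"
  proof
    fix m
    have "h (xstar m) = (\<Sum>j\<in>F. if m = j then r j else 0)"
      unfolding h_def delta_def xstar_single by (rule sum.cong) auto
    then have hm: "h (xstar m) = r m"
      using assms(1,2) by (simp add: sum.delta)
    show "Phi G m = r m"
      using assms(3)[rule_format, of m] assms(2) F'n
      by (auto simp: Phi_def G_def hm delta_def xstar_F F'_def abs_le_iff)
  qed
  moreover have "(\<Sum>x\<leftarrow>xs. \<bar>G x\<bar>) \<le> c" if "admL xs" for xs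
  proof -
    have "(\<Sum>x\<leftarrow>xs. \<bar>G x\<bar>) \<le> (\<Sum>x\<leftarrow>xs. c * \<bar>x F'\<bar>)"
    proof (rule sum_list_mono)
      fix x
      have "\<bar>G x\<bar> \<le> \<bar>c * x F'\<bar>" using clamp_le[of "c * x F'" "h x"] by (simp add: G_def delta_def)
      then show "\<bar>G x\<bar> \<le> c * \<bar>x F'\<bar>" using assms(4) by (simp add: abs_mult)
    qed
    also have "\<dots> = c * (\<Sum>x\<leftarrow>xs. \<bar>x F'\<bar>)" by (simp add: sum_list_const_mult)
    also have "\<dots> \<le> c * 1"
      using that F'n assms(4) unfolding admL_def by (intro mult_left_mono) auto
    finally show ?thesis by simp
  qed
  ultimately show ?thesis by blast
qed

theorem mainTheorem4:
  shows "(\<forall>S\<in>finNE. Phi (delta S) = (\<lambda>n. \<Sum>i\<in>S. unitvec i n))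
       \<and> (\<forall>f\<in>FBL finNE. Phi f \<in> c0)
       \<and> fbl_c0_lattice_hom finNE Phi
       \<and> Phi ` FBL finNE = c0"
proof -
  have P1: "\<forall>S\<in>finNE. Phi (delta S) = (\<lambda>n. \<Sum>i\<in>S. unitvec i n)"
  proof (intro ballI ext)
    fix S n assume S: "S \<in> finNE"
    have "(\<Sum>i\<in>S. unitvec i n) = (\<Sum>i\<in>S. if n = i then 1 else 0)"
      by (rule sum.cong) (auto simp: unitvec_def)
    then show "Phi (delta S) n = (\<Sum>i\<in>S. unitvec i n)"
      using S by (simp add: Phi_def delta_def xstar_F finNE_def)
  qed
  have P2: "\<forall>f\<in>FBL finNE. Phi f \<in> c0"
  proof
    fix f assume "f \<in> FBL finNE"
    then show "Phi f \<in> c0"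
    proof (induction rule: FBL.induct)
      case (gen a)
      then have "finite a" by (simp add: finNE_def)
      have "eventually (\<lambda>n. Phi (delta a) n = 0) sequentially"
      proof -
        obtain N where "\<forall>i\<in>a. i < N" using \<open>finite a\<close> finite_nat_bounded by blast
        then have "\<forall>n\<ge>N. Phi (delta a) n = 0"
          using gen by (auto simp: Phi_def delta_def xstar_F)
        then show ?thesis by (auto simp: eventually_sequentially)
      qed
      then show ?case unfolding c0_def by (simp add: tendsto_eventually)
    next
      case zero
      then show ?case by (simp add: c0_def Phi_def)
    next
      case (add f g)
      then show ?case using tendsto_add[of "Phi f" 0 sequentially "Phi g" 0]
        by (simp add: c0_def Phi_def)
    next
      case (smult f c)
      then show ?case using tendsto_mult[of "\<lambda>_. c" c sequentially "Phi f" 0]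
        by (simp add: c0_def Phi_def)
    next
      case (sup f g)
      then show ?case using tendsto_max[of "Phi f" 0 sequentially "Phi g" 0]
        by (simp add: c0_def Phi_def)
    next
      case (lim g f)
      show ?case unfolding c0_def mem_Collect_eq
      proof (rule LIMSEQ_I)
        fix e :: real assume e: "0 < e"
        have "eventually (\<lambda>n. fbl_norm finNE (\<lambda>x. g n x - f x) < ereal (e/2)) sequentially"
          using lim(2) e by (intro order_tendstoD(2)) auto
        then obtain n where n: "fbl_norm finNE (\<lambda>x. g n x - f x) < ereal (e/2)"
          by (auto simp: eventually_sequentially)
        have "Phi (g n) \<longlonglongrightarrow> 0" using lim(3)[of n] by (simp add: c0_def)
        then obtain N where N: "\<forall>m\<ge>N. norm (Phi (g n) m - 0) < e/2"
          using e LIMSEQ_D[of "Phi (g n)" 0 "e/2"] by auto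
        show "\<exists>N. \<forall>m\<ge>N. norm (Phi f m - 0) < e"
        proof (intro exI allI impI)
          fix m assume "N \<le> m"
          have "ereal \<bar>g n (xstar m) - f (xstar m)\<bar> \<le> fbl_norm finNE (\<lambda>x. g n x - f x)"
            using single_le[OF xstar_cube, of "\<lambda>x. g n x - f x" m] by simp
          then have "ereal \<bar>g n (xstar m) - f (xstar m)\<bar> < ereal (e/2)" using n by (rule order.strict_trans1)
          then have "\<bar>g n (xstar m) - f (xstar m)\<bar> < e/2" by simp
          moreover have "\<bar>g n (xstar m)\<bar> < e/2" using N \<open>N \<le> m\<close> by (auto simp: Phi_def)
          moreover have "\<bar>f (xstar m)\<bar> \<le> \<bar>g n (xstar m)\<bar> + \<bar>g n (xstar m) - f (xstar m)\<bar>"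
            using abs_triangle_ineq[of "g n (xstar m)" "-(g n (xstar m) - f (xstar m))"] by simp
          ultimately show "norm (Phi f m - 0) < e" by (simp add: Phi_def)
        qed
      qed
    qed
  qed
  have P3: "fbl_c0_lattice_hom finNE Phi"
    unfolding fbl_c0_lattice_hom_def
  proof (intro conjI)
    show "\<exists>C. \<forall>f\<in>FBL finNE. ereal (SUP n. \<bar>Phi f n\<bar>) \<le> ereal C * fbl_norm finNE f"
    proof (intro exI ballI)
      fix f :: "(nat set \<Rightarrow> real) \<Rightarrow> real"
      have b: "ereal \<bar>Phi f n\<bar> \<le> fbl_norm finNE f" for n
        using single_le[OF xstar_cube, of f n] by (simp add: Phi_def)
      show "ereal (SUP n. \<bar>Phi f n\<bar>) \<le> ereal 1 * fbl_norm finNE f"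
      proof (cases "fbl_norm finNE f")
        case (real r)
        then have "(SUP n. \<bar>Phi f n\<bar>) \<le> r" using b by (intro cSUP_least) auto
        then show ?thesis using real by simp
      next
        case PInf then show ?thesis by simp
      next
        case MInf then show ?thesis using b[of 0] by simp
      qed
    qed
  qed (use P2 in \<open>auto simp: Phi_def\<close>)
  have P4: "c0 \<subseteq> Phi ` FBL finNE"
  proof
    fix s assume "s \<in> c0"
    then have s0: "s \<longlonglongrightarrow> 0" by (simp add: c0_def)
    obtain B where B: "B > 0" "\<forall>m. \<bar>s m\<bar> \<le> B"
      using convergent_imp_Bseq[of s] s0 convergentI[OF s0] by (auto elim!: BseqE)
    have "\<forall>k. \<exists>N. \<forall>m\<ge>N. \<bar>s m\<bar> \<le> B * (1/2)^k"
    proof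
      fix k :: nat
      have "B * (1/2)^k > 0" using B by simp
      from LIMSEQ_D[OF s0 this] show "\<exists>N. \<forall>m\<ge>N. \<bar>s m\<bar> \<le> B * (1/2)^k"
        by (auto intro: less_imp_le)
    qed
    then obtain N where N: "\<And>k m. m \<ge> N k \<Longrightarrow> \<bar>s m\<bar> \<le> B * (1/2)^k"
      by metis
    define M where "M = (\<lambda>k. (\<Sum>j\<in>{1..k}. N j) + k)"
    have M0: "M 0 = 0" by (simp add: M_def)
    have Mmono: "M k \<le> M (Suc k)" for k by (simp add: M_def)
    have Mk: "k \<le> M k" for k by (simp add: M_def)
    have Mb: "\<bar>s m\<bar> \<le> B * (1/2)^k" if "m \<ge> M k" for m k
    proof (cases "k = 0")
      case True then show ?thesis using B by simp
    next
      case False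
      then have "N k \<le> (\<Sum>j\<in>{1..k}. N j)" by (intro member_le_sum) auto
      then show ?thesis using that by (intro N) (simp add: M_def)
    qed
    define T where "T = (\<lambda>K m. if m < M K then s m else 0)"
    define r where "r = (\<lambda>k m. T (Suc k) m - T k m)"
    have "\<forall>k. \<exists>G\<in>FBL finNE. Phi G = r k \<and> (\<forall>xs. admL xs \<longrightarrow> (\<Sum>x\<leftarrow>xs. \<bar>G x\<bar>) \<le> B * (1/2)^k)"
    proof
      fix k
      show "\<exists>G\<in>FBL finNE. Phi G = r k \<and> (\<forall>xs. admL xs \<longrightarrow> (\<Sum>x\<leftarrow>xs. \<bar>G x\<bar>) \<le> B * (1/2)^k)"
      proof (rule fin_rep[of "{..<M (Suc k)}"])
        show "\<forall>m. m \<notin> {..<M (Suc k)} \<longrightarrow> r k m = 0"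
          using Mmono[of k] by (auto simp: r_def T_def)
        show "\<forall>m. \<bar>r k m\<bar> \<le> B * (1/2)^k"
        proof
          fix m
          show "\<bar>r k m\<bar> \<le> B * (1/2)^k"
          proof (cases "m < M k")
            case True then show ?thesis using Mmono[of k] B by (simp add: r_def T_def)
          next
            case False then show ?thesis using Mb[of k m] B by (auto simp: r_def T_def)
          qed
        qed
        show "0 \<le> B * (1/2)^k" using B by simp
      qed simp
    qed
    then obtain G where GF: "\<And>k. G k \<in> FBL finNE" and GP: "\<And>k. Phi (G k) = r k"
      and Gn: "\<And>k xs. admL xs \<Longrightarrow> (\<Sum>x\<leftarrow>xs. \<bar>G k x\<bar>) \<le> B * (1/2)^k"
      by metis
    have Gb: "\<bar>G k x\<bar> \<le> B * (1/2)^k" if "x \<in> cube finNE" for k x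
      using Gn[OF single_adm[OF that], of k] by simp
    have summ: "summable (\<lambda>k. G k x)" if "x \<in> cube finNE" for x
    proof (rule summable_comparison_test)
      show "\<exists>N. \<forall>n\<ge>N. norm (G n x) \<le> B * (1/2)^n" using Gb[OF that] by auto
      show "summable (\<lambda>n. B * (1/2::real)^n)" by (intro summable_mult summable_geometric) simp
    qed
    define f where "f = (\<lambda>x. \<Sum>k. G k x)"
    define g where "g = (\<lambda>K x. \<Sum>k<K. G k x)"
    have gF: "g K \<in> FBL finNE" for K unfolding g_def by (rule FBL_sum) (auto intro: GF)
    have tail: "(\<Sum>x\<leftarrow>xs. \<bar>g K x - f x\<bar>) \<le> 2 * B * (1/2)^K" if xs: "admL xs" for xs K
    proof -
      have cub: "x \<in> cube finNE" if "x \<in> set xs" for x using xs that by (auto simp: admL_def)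
      have eq: "\<bar>g K x - f x\<bar> = \<bar>\<Sum>j. G (j+K) x\<bar>" if "x \<in> set xs" for x
        using suminf_split_initial_segment[OF summ[OF cub[OF that]], of K]
        by (simp add: f_def g_def)
      have lim: "(\<lambda>J. \<Sum>x\<leftarrow>xs. \<bar>\<Sum>j<J. G (j+K) x\<bar>) \<longlonglongrightarrow> (\<Sum>x\<leftarrow>xs. \<bar>g K x - f x\<bar>)"
      proof (rule sum_list_tendsto)
        fix x assume x: "x \<in> set xs"
        have "summable (\<lambda>j. G (j+K) x)"
          using summ[OF cub[OF x]] by (rule summable_ignore_initial_segment)
        from tendsto_rabs[OF summable_LIMSEQ[OF this]]
        show "(\<lambda>J. \<bar>\<Sum>j<J. G (j+K) x\<bar>) \<longlonglongrightarrow> \<bar>g K x - f x\<bar>" using eq[OF x] by simp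
      qed
      have bnd: "(\<Sum>x\<leftarrow>xs. \<bar>\<Sum>j<J. G (j+K) x\<bar>) \<le> 2 * B * (1/2)^K" for J
      proof -
        have "(\<Sum>x\<leftarrow>xs. \<bar>\<Sum>j<J. G (j+K) x\<bar>) \<le> (\<Sum>x\<leftarrow>xs. \<Sum>j<J. \<bar>G (j+K) x\<bar>)"
          by (intro sum_list_mono sum_abs)
        also have "\<dots> = (\<Sum>j<J. \<Sum>x\<leftarrow>xs. \<bar>G (j+K) x\<bar>)" by (rule sum_list_swap)
        also have "\<dots> \<le> (\<Sum>j<J. B * (1/2)^K * (1/2)^j)"
        proof (intro sum_mono)
          fix j
          have "(\<Sum>x\<leftarrow>xs. \<bar>G (j+K) x\<bar>) \<le> B * (1/2)^(j+K)" by (rule Gn[OF xs])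
          also have "\<dots> = B * (1/2)^K * (1/2)^j" by (simp add: power_add)
          finally show "(\<Sum>x\<leftarrow>xs. \<bar>G (j+K) x\<bar>) \<le> B * (1/2)^K * (1/2)^j" .
        qed
        also have "\<dots> = B * (1/2)^K * (\<Sum>j<J. (1/2)^j)" by (simp add: sum_distrib_left)
        also have "\<dots> \<le> B * (1/2)^K * 2"
          using B by (intro mult_left_mono geom_bound) auto
        finally show ?thesis by simp
      qed
      show ?thesis using bnd by (intro LIMSEQ_le_const2[OF lim]) auto
    qed
    have "(\<lambda>K. fbl_norm finNE (\<lambda>x. g K x - f x)) \<longlonglongrightarrow> 0"
    proof (rule tendsto_sandwich[of "\<lambda>_. 0" _ _ "\<lambda>K. ereal (2 * B * (1/2)^K)"])
      show "\<forall>\<^sub>F K in sequentially. 0 \<le> fbl_norm finNE (\<lambda>x. g K x - f x)"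
      proof (intro always_eventually allI)
        fix K
        have "ereal 0 \<le> ereal \<bar>g K (xstar 0) - f (xstar 0)\<bar>" by simp
        also have "\<dots> \<le> fbl_norm finNE (\<lambda>x. g K x - f x)"
          using single_le[OF xstar_cube, of "\<lambda>x. g K x - f x" 0] by simp
        finally show "0 \<le> fbl_norm finNE (\<lambda>x. g K x - f x)" by (simp add: zero_ereal_def)
      qed
      show "\<forall>\<^sub>F K in sequentially. fbl_norm finNE (\<lambda>x. g K x - f x) \<le> ereal (2 * B * (1/2)^K)"
      proof (intro always_eventually allI)
        fix K
        show "fbl_norm finNE (\<lambda>x. g K x - f x) \<le> ereal (2 * B * (1/2)^K)"
          by (rule fbl_norm_le) (rule tail)
      qed
      have "(\<lambda>K. 2 * B * (1/2::real)^K) \<longlonglongrightarrow> 2 * B * 0"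
        by (intro tendsto_mult tendsto_const LIMSEQ_realpow_zero) auto
      then have "(\<lambda>K. ereal (2 * B * (1/2)^K)) \<longlonglongrightarrow> ereal 0" by (intro tendsto_ereal) simp
      then show "(\<lambda>K. ereal (2 * B * (1/2)^K)) \<longlonglongrightarrow> 0" by (simp add: zero_ereal_def)
    qed simp
    then have fF: "f \<in> FBL finNE" by (rule FBL.lim[of g, OF gF])
    have "Phi f = s"
    proof
      fix m
      have rk: "G k (xstar m) = r k m" for k using fun_cong[OF GP[of k], of m] by (simp add: Phi_def)
      have ps: "(\<Sum>k<K. r k m) = T K m" for K
        using sum_lessThan_telescope[of "\<lambda>k. T k m" K] by (simp add: r_def T_def M0)
      have "eventually (\<lambda>K. (\<Sum>k<K. r k m) = s m) sequentially"
        unfolding eventually_sequentially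
      proof (intro exI allI impI)
        fix K assume "Suc m \<le> K"
        then show "(\<Sum>k<K. r k m) = s m" using Mk[of K] by (simp add: ps T_def)
      qed
      then have "(\<lambda>K. \<Sum>k<K. r k m) \<longlonglongrightarrow> s m" by (rule tendsto_eventually)
      then have "(\<lambda>k. r k m) sums s m" by (simp add: sums_def)
      then have "(\<Sum>k. r k m) = s m" by (rule sums_unique[symmetric])
      then show "Phi f m = s m" by (simp add: Phi_def f_def rk)
    qed
    with fF show "s \<in> Phi ` FBL finNE" by blast
  qed
  show ?thesis using P1 P2 P3 P4 by blast
qed

end
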